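(* Let $q$ be a prime power, $1\le k\le n-1$, and let $\mathcal{L}$ be a Cameron-Liebler $k$-set of $\mathrm{AG}(n,q)$ with parameter $x$. Then for every $k$-spread $\mathcal{S}$ of $\mathrm{AG}(n,q)$ we have $|\mathcal{L}\cap\mathcal{S}|=x$.
   Context: $\mathrm{AG}(n,q)$ is $\mathrm{PG}(n,q)$ with a hyperplane $\pi_\infty$ removed; affine points are points outside $\pi_\infty$, affine $k$-spaces are $k$-dimensional projective subspaces not contained in $\pi_\infty$ (identified with their sets of affine points). A $k$-spread of $\mathrm{AG}(n,q)$ is a set of affine $k$-spaces that pairwise share no affine point and together cover all affine points. With $A_n$ the incidence matrix of affine points versus affine $k$-spaces, a set $\mathcal{L}$ of affine $k$-spaces is a Cameron-Liebler $k$-set of $\mathrm{AG}(n,q)$ if its characteristic vector lies in the real row space $\mathrm{Im}(A_n^T)$; its parameter is $x=|\mathcal{L}|/\left[{n\atop k}\right]_q$, where $\left[{a\atop b}\right]_q=\frac{(q^a-1)\cdots(q^{a-b+1}-1)}{(q^b-1)\cdots(q-1)}$. *)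

theory Defs
  imports "HOL-Analysis.Analysis"
begin

text \<open>AG(n,q) is modelled as the vector space F^n over a finite field F with q elements,
  where n = CARD('n). Affine points are the vectors; an affine k-space is (the point set of)
  a coset v + W of a k-dimensional linear subspace W.\<close>

definition affine_kspaces :: "nat \<Rightarrow> ('a::{finite,field} ^ 'n) set set" where
  "affine_kspaces k = {(\<lambda>w. v + w) ` W | v W. vec.subspace W \<and> vec.dim W = k}"

definition is_kspread :: "nat \<Rightarrow> ('a::{finite,field} ^ 'n) set set \<Rightarrow> bool" where
  "is_kspread k S \<longleftrightarrow> S \<subseteq> affine_kspaces k
     \<and> (\<forall>A\<in>S. \<forall>B\<in>S. A \<noteq> B \<longrightarrow> A \<inter> B = {})
     \<and> \<Union>S = UNIV"

text \<open>Cameron-Liebler k-set: the characteristic vector (indexed by affine k-spaces) lies in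
  the real row space of the point/k-space incidence matrix A_n, i.e. in Im(A_n^T): it is a
  real linear combination of the rows (one row per affine point p).\<close>
definition cameron_liebler_kset :: "nat \<Rightarrow> ('a::{finite,field} ^ 'n) set set \<Rightarrow> bool" where
  "cameron_liebler_kset k L \<longleftrightarrow> L \<subseteq> affine_kspaces k
     \<and> (\<exists>c :: 'a ^ 'n \<Rightarrow> real. \<forall>T\<in>affine_kspaces k.
          (if T \<in> L then 1 else 0) = (\<Sum>p\<in>UNIV. c p * (if p \<in> T then 1 else 0)))"

definition gauss_binom :: "nat \<Rightarrow> nat \<Rightarrow> real \<Rightarrow> real" where
  "gauss_binom a b q = (\<Prod>i<b. q ^ (a - i) - 1) / (\<Prod>i<b. q ^ (i + 1) - 1)"

definition cl_parameter :: "nat \<Rightarrow> ('a::{finite,field} ^ 'n) set set \<Rightarrow> real" where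
  "cl_parameter k L = real (card L) / gauss_binom CARD('n) k (real CARD('a))"

end

theory Submission
  imports Defs
begin

lemma card_span_indep:
  fixes B :: "('a::{finite,field} ^ 'n) set"
  assumes ind: "vec.independent B"
  shows "card (vec.span B) = CARD('a) ^ card B"
proof -
  have fin: "finite B" by simp
  let ?f = "\<lambda>u. \<Sum>v\<in>B. u v *s v"
  have img: "vec.span B = ?f ` (B \<rightarrow>\<^sub>E UNIV)"
  proof -
    have "range ?f = ?f ` (B \<rightarrow>\<^sub>E UNIV)"
    proof
      show "range ?f \<subseteq> ?f ` (B \<rightarrow>\<^sub>E UNIV)"
      proof
        fix y assume "y \<in> range ?f"
        then obtain u where y: "y = ?f u" by blast
        have a: "?f (restrict u B) = ?f u" by (rule sum.cong) auto
        have b: "restrict u B \<in> B \<rightarrow>\<^sub>E UNIV" by simp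
        have "y = ?f (restrict u B)" using y a by simp
        then show "y \<in> ?f ` (B \<rightarrow>\<^sub>E UNIV)" using b by (rule image_eqI)
      qed
    qed blast
    then show ?thesis using vec.span_finite[OF fin] by simp
  qed
  have inj: "inj_on ?f (B \<rightarrow>\<^sub>E UNIV)"
  proof (rule inj_onI)
    fix u u' assume u: "u \<in> B \<rightarrow>\<^sub>E UNIV" and u': "u' \<in> B \<rightarrow>\<^sub>E UNIV" and eq: "?f u = ?f u'"
    have "(\<Sum>v\<in>B. (u v - u' v) *s v) = ?f u - ?f u'"
      by (simp only: sum_subtractf[symmetric] vector_sub_rdistrib)
    also have "\<dots> = 0" using eq by simp
    finally have z: "(\<Sum>v\<in>B. (u v - u' v) *s v) = 0" .
    have "\<forall>v\<in>B. u v - u' v = 0"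
      using conjunct2[OF ind[unfolded vec.independent_explicit], rule_format, OF z] by blast
    then have "\<forall>v\<in>B. u v = u' v" by simp
    then show "u = u'" using PiE_ext[OF u u'] by blast
  qed
  have "card (vec.span B) = card (B \<rightarrow>\<^sub>E (UNIV::'a set))"
    unfolding img by (rule card_image[OF inj])
  also have "\<dots> = CARD('a) ^ card B" by (simp add: card_PiE fin)
  finally show ?thesis .
qed

lemma card_subspace:
  fixes U :: "('a::{finite,field} ^ 'n) set"
  assumes "vec.subspace U"
  shows "card U = CARD('a) ^ vec.dim U"
proof -
  obtain B where B: "B \<subseteq> U" "vec.independent B" "U \<subseteq> vec.span B" "card B = vec.dim U"
    by (rule vec.basis_exists)
  have "vec.span B = U" using vec.span_subspace[OF B(1) B(3) assms] .
  then show ?thesis using card_span_indep[OF B(2)] B(4) by simp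
qed

definition indep_lists :: "('a::{finite,field} ^ 'n) set \<Rightarrow> nat \<Rightarrow> ('a ^ 'n) list set" where
  "indep_lists U j = {xs. length xs = j \<and> distinct xs \<and> set xs \<subseteq> U \<and> vec.independent (set xs)}"

lemma indep_lists_Suc:
  "indep_lists U (Suc j) = (\<lambda>(xs,x). x # xs) ` (SIGMA xs:indep_lists U j. U - vec.span (set xs))"
proof (intro equalityI subsetI)
  fix ys assume "ys \<in> indep_lists U (Suc j)"
  then obtain x xs where ys: "ys = x # xs" and h: "length xs = j" "distinct (x#xs)" "set (x#xs) \<subseteq> U"
     "vec.independent (set (x#xs))"
    unfolding indep_lists_def by (cases ys) auto
  have "x \<notin> vec.span (set xs)" "vec.independent (set xs)"
    using h(2,4) vec.independent_insert[of x "set xs"] by auto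
  then show "ys \<in> (\<lambda>(xs,x). x # xs) ` (SIGMA xs:indep_lists U j. U - vec.span (set xs))"
    using h ys unfolding indep_lists_def by force
next
  fix ys assume "ys \<in> (\<lambda>(xs,x). x # xs) ` (SIGMA xs:indep_lists U j. U - vec.span (set xs))"
  then obtain x xs where ys: "ys = x # xs" and xs: "xs \<in> indep_lists U j" and x: "x \<in> U" "x \<notin> vec.span (set xs)"
    by auto
  have "x \<notin> set xs" using x(2) vec.span_base by blast
  then show "ys \<in> indep_lists U (Suc j)"
    using xs x ys vec.independent_insert[of x "set xs"] unfolding indep_lists_def by auto
qed

lemma finite_indep_lists: "finite (indep_lists U j)"
proof -
  have "indep_lists U j \<subseteq> {xs. set xs \<subseteq> UNIV \<and> length xs = j}" unfolding indep_lists_def by auto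
  then show ?thesis using finite_lists_length_eq[OF finite_class.finite_UNIV, of j] finite_subset by metis
qed

lemma card_indep_lists:
  fixes U :: "('a::{finite,field} ^ 'n) set"
  assumes U: "vec.subspace U" and j: "j \<le> vec.dim U"
  shows "card (indep_lists U j) = (\<Prod>i<j. CARD('a) ^ vec.dim U - CARD('a) ^ i)"
  using j
proof (induction j)
  case 0
  have "indep_lists U 0 = {[]}" unfolding indep_lists_def by (auto simp: vec.independent_empty)
  then show ?case by simp
next
  case (Suc j)
  let ?q = "CARD('a)" and ?d = "vec.dim U"
  have c: "card (U - vec.span (set xs)) = ?q ^ ?d - ?q ^ j" if xs: "xs \<in> indep_lists U j" for xs
  proof -
    have "vec.span (set xs) \<subseteq> U" using xs U unfolding indep_lists_def
      by (simp add: vec.span_minimal)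
    moreover have "card (vec.span (set xs)) = ?q ^ j"
      using card_span_indep[of "set xs"] xs unfolding indep_lists_def by (simp add: distinct_card)
    ultimately show ?thesis using card_subspace[OF U] by (simp add: card_Diff_subset)
  qed
  have inj: "inj_on (\<lambda>(xs,x). x # xs) (SIGMA xs:indep_lists U j. U - vec.span (set xs))"
    by (auto simp: inj_on_def)
  have "card (indep_lists U (Suc j)) = card (SIGMA xs:indep_lists U j. U - vec.span (set xs))"
    unfolding indep_lists_Suc using card_image[OF inj] .
  also have "\<dots> = (\<Sum>xs\<in>indep_lists U j. card (U - vec.span (set xs)))"
    by (rule card_SigmaI) (auto simp: finite_indep_lists)
  also have "\<dots> = (\<Sum>xs\<in>indep_lists U j. ?q ^ ?d - ?q ^ j)"
    using c by (intro sum.cong) auto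
  also have "\<dots> = card (indep_lists U j) * (?q ^ ?d - ?q ^ j)" by simp
  also have "\<dots> = (\<Prod>i<Suc j. ?q ^ ?d - ?q ^ i)" using Suc by simp
  finally show ?case .
qed

lemma span_indep_list:
  assumes "xs \<in> indep_lists W k" "vec.subspace W" "vec.dim W = k"
  shows "vec.span (set xs) = W"
proof -
  have h: "set xs \<subseteq> W" "card (set xs) = vec.dim W" "vec.independent (set xs)"
    using assms unfolding indep_lists_def by (auto simp: distinct_card)
  have "W \<subseteq> vec.span (set xs)" using vec.card_eq_dim[OF h(1,2)] h(3) by simp
  moreover have "vec.span (set xs) \<subseteq> W" using h(1) assms(2) by (simp add: vec.span_minimal)
  ultimately show ?thesis by blast
qed

lemma count_subspaces:
  assumes k: "k \<le> CARD('n)"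
  shows "card {W :: ('a::{finite,field} ^ 'n) set. vec.subspace W \<and> vec.dim W = k}
      * (\<Prod>i<k. CARD('a) ^ k - CARD('a) ^ i) = (\<Prod>i<k. CARD('a) ^ CARD('n) - CARD('a) ^ i)"
proof -
  let ?Sub = "{W :: ('a ^ 'n) set. vec.subspace W \<and> vec.dim W = k}"
  have dimU: "vec.dim (UNIV :: ('a ^ 'n) set) = CARD('n)" by (simp add: vec.dim_UNIV card_cart_basis)
  have eq: "indep_lists (UNIV :: ('a ^ 'n) set) k = (\<Union>W\<in>?Sub. indep_lists W k)"
  proof (intro equalityI subsetI)
    fix xs assume xs: "xs \<in> indep_lists (UNIV :: ('a ^ 'n) set) k"
    let ?W = "vec.span (set xs)"
    have "vec.subspace ?W" by (rule vec.subspace_span)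
    moreover have "vec.dim ?W = k" using xs unfolding indep_lists_def
      by (metis (mono_tags, lifting) mem_Collect_eq vec.dim_span_eq_card_independent distinct_card)
    moreover have "xs \<in> indep_lists ?W k" using xs vec.span_base unfolding indep_lists_def by auto
    ultimately show "xs \<in> (\<Union>W\<in>?Sub. indep_lists W k)" by blast
  qed (auto simp: indep_lists_def)
  have "card (indep_lists (UNIV :: ('a ^ 'n) set) k) = (\<Sum>W\<in>?Sub. card (indep_lists W k))"
    unfolding eq
  proof (rule card_UN_disjoint)
    show "finite ?Sub" by simp
    show "\<forall>W\<in>?Sub. finite (indep_lists W k)" by (simp add: finite_indep_lists)
    show "\<forall>W\<in>?Sub. \<forall>W'\<in>?Sub. W \<noteq> W' \<longrightarrow> indep_lists W k \<inter> indep_lists W' k = {}"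
      using span_indep_list by blast
  qed
  also have "\<dots> = (\<Sum>W\<in>?Sub. (\<Prod>i<k. CARD('a) ^ k - CARD('a) ^ i))"
    by (intro sum.cong refl) (simp add: card_indep_lists)
  also have "\<dots> = card ?Sub * (\<Prod>i<k. CARD('a) ^ k - CARD('a) ^ i)" by simp
  moreover have "card (indep_lists (UNIV :: ('a ^ 'n) set) k) = (\<Prod>i<k. CARD('a) ^ CARD('n) - CARD('a) ^ i)"
    using card_indep_lists[of "UNIV :: ('a ^ 'n) set" k] dimU k vec.subspace_UNIV by simp
  ultimately show ?thesis by simp
qed

lemma prod_factor:
  fixes q :: real
  assumes "k \<le> m"
  shows "(\<Prod>i<k. q ^ m - q ^ i) = (\<Prod>i<k. q ^ i) * (\<Prod>i<k. q ^ (m - i) - 1)"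
proof -
  have "(\<Prod>i<k. q ^ m - q ^ i) = (\<Prod>i<k. q ^ i * (q ^ (m - i) - 1))"
  proof (intro prod.cong refl)
    fix i assume "i \<in> {..<k}"
    then have "m = i + (m - i)" using assms by auto
    then have "q ^ m = q ^ i * q ^ (m - i)" by (metis power_add)
    then show "q ^ m - q ^ i = q ^ i * (q ^ (m - i) - 1)" by (simp add: algebra_simps)
  qed
  also have "\<dots> = (\<Prod>i<k. q ^ i) * (\<Prod>i<k. q ^ (m - i) - 1)" by (rule prod.distrib)
  finally show ?thesis .
qed

lemma count_subspaces_gauss:
  assumes k: "k \<le> CARD('n)"
  shows "real (card {W :: ('a::{finite,field} ^ 'n) set. vec.subspace W \<and> vec.dim W = k})
     = gauss_binom CARD('n) k (real CARD('a))"
    and "gauss_binom CARD('n) k (real CARD('a)) > 0"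
proof -
  let ?N = "card {W :: ('a ^ 'n) set. vec.subspace W \<and> vec.dim W = k}"
  let ?q = "CARD('a)" and ?n = "CARD('n)"
  define r where "r = real ?q"
  have q2: "?q \<ge> 2"
  proof -
    have "(0::'a) \<noteq> 1" by simp
    then have "card {0::'a, 1} = 2" by simp
    then show ?thesis using card_mono[of UNIV "{0::'a,1}"] by simp
  qed
  then have r2: "r \<ge> 2" unfolding r_def by simp
  have le: "?q ^ i \<le> ?q ^ m" if "i \<le> m" for i m
    using q2 that by (intro power_increasing) auto
  have "real (?N * (\<Prod>i<k. ?q ^ k - ?q ^ i)) = real (\<Prod>i<k. ?q ^ ?n - ?q ^ i)"
    by (rule arg_cong[where f=real]) (rule count_subspaces[OF k, where 'a='a])
  moreover have conv: "real (\<Prod>i<k. ?q ^ m - ?q ^ i) = (\<Prod>i<k. r ^ m - r ^ i)" if "k \<le> m" for m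
  proof -
    have "real (\<Prod>i<k. ?q ^ m - ?q ^ i) = (\<Prod>i<k. real (?q ^ m - ?q ^ i))" by (rule of_nat_prod)
    also have "\<dots> = (\<Prod>i<k. r ^ m - r ^ i)"
    proof (intro prod.cong refl)
      fix i assume "i \<in> {..<k}"
      then have "?q ^ i \<le> ?q ^ m" using le that by auto
      then show "real (?q ^ m - ?q ^ i) = r ^ m - r ^ i" unfolding r_def by (simp add: of_nat_diff)
    qed
    finally show ?thesis .
  qed
  ultimately have e1: "real ?N * (\<Prod>i<k. r ^ k - r ^ i) = (\<Prod>i<k. r ^ ?n - r ^ i)"
    using k by (simp only: of_nat_mult conv order_refl)
  define P where "P = (\<Prod>i<k. r ^ i)"
  define D where "D = (\<Prod>i<k. r ^ (i + 1) - 1)"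
  define Nu where "Nu = (\<Prod>i<k. r ^ (?n - i) - 1)"
  have Ppos: "P > 0" unfolding P_def using r2 by (intro prod_pos) auto
  have Dpos: "D > 0" unfolding D_def
  proof (intro prod_pos)
    fix i assume "i \<in> {..<k}"
    have "1 < r ^ (i + 1)" using r2 by (intro one_less_power) auto
    then show "r ^ (i + 1) - 1 > 0" by simp
  qed
  have Nupos: "Nu > 0" unfolding Nu_def
  proof (intro prod_pos)
    fix i assume "i \<in> {..<k}"
    then have "1 \<le> ?n - i" using k by auto
    then have "1 < r ^ (?n - i)" using r2 by (intro one_less_power) auto
    then show "r ^ (?n - i) - 1 > 0" by simp
  qed
  have Deq: "(\<Prod>i<k. r ^ (k - i) - 1) = D"
  proof -
    have "(\<Prod>i<k. r ^ (k - i) - 1) = (\<Prod>i<k. (\<lambda>j. r ^ (j + 1) - 1) (k - Suc i))"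
    proof (intro prod.cong refl)
      fix i assume "i \<in> {..<k}"
      then have "k - Suc i + 1 = k - i" by auto
      then show "r ^ (k - i) - 1 = (\<lambda>j. r ^ (j + 1) - 1) (k - Suc i)" by (simp only:)
    qed
    also have "\<dots> = D" unfolding D_def by (rule prod.nat_diff_reindex)
    finally show ?thesis .
  qed
  have f1: "(\<Prod>i<k. r ^ k - r ^ i) = P * D"
    unfolding P_def Deq[symmetric] by (rule prod_factor[OF order_refl])
  have f2: "(\<Prod>i<k. r ^ ?n - r ^ i) = P * Nu"
    unfolding P_def Nu_def by (rule prod_factor[OF k])
  have "real ?N * (P * D) = P * Nu" using e1 unfolding f1 f2 .
  then have "P * (real ?N * D) = P * Nu" by (simp only: mult.left_commute)
  then have "real ?N * D = Nu" using Ppos by simp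
  then have Neq: "real ?N = Nu / D" using Dpos by (simp add: eq_divide_eq)
  have G: "gauss_binom ?n k r = Nu / D" unfolding gauss_binom_def Nu_def D_def by (rule refl)
  show "real ?N = gauss_binom ?n k (real ?q)" unfolding r_def[symmetric] G by (rule Neq)
  show "gauss_binom ?n k (real ?q) > 0" unfolding r_def[symmetric] G using Nupos Dpos by simp
qed

lemma sum_ind:
  assumes "finite A"
  shows "(\<Sum>x\<in>A. if P x then 1 else 0 :: real) = real (card {x\<in>A. P x})"
proof -
  have "(\<Sum>x\<in>A. if P x then 1 else 0 :: real) = sum (\<lambda>_. 1) {x\<in>A. P x}"
    by (rule sum.inter_filter[OF assms, symmetric])
  then show ?thesis by simp
qed

lemma through_point:
  fixes p :: "'a::{finite,field} ^ 'n"
  shows "card {T \<in> affine_kspaces k. p \<in> T} = card {W :: ('a ^ 'n) set. vec.subspace W \<and> vec.dim W = k}"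
proof -
  let ?Sub = "{W :: ('a ^ 'n) set. vec.subspace W \<and> vec.dim W = k}"
  have "bij_betw (\<lambda>W. (\<lambda>w. p + w) ` W) ?Sub {T \<in> affine_kspaces k. p \<in> T}"
  proof (rule bij_betwI')
    fix W W' assume "W \<in> ?Sub" "W' \<in> ?Sub"
    have inj: "inj (\<lambda>w. p + w)" by (rule injI) simp
    show "((\<lambda>w. p + w) ` W = (\<lambda>w. p + w) ` W') = (W = W')"
      using inj_image_eq_iff[OF inj] .
  next
    fix W assume W: "W \<in> ?Sub"
    then have W1: "vec.subspace W" and W2: "vec.dim W = k" by simp_all
    have "0 \<in> W" using W1 by (rule vec.subspace_0)
    have "p = p + 0" by simp
    then have pin: "p \<in> (\<lambda>w. p + w) ` W" using \<open>0 \<in> W\<close> by (rule image_eqI)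
    have "(\<lambda>w. p + w) ` W \<in> affine_kspaces k"
      unfolding affine_kspaces_def mem_Collect_eq using W1 W2 by (intro exI[of _ p] exI[of _ W]) simp
    then show "(\<lambda>w. p + w) ` W \<in> {T \<in> affine_kspaces k. p \<in> T}" using pin by simp
  next
    fix T assume "T \<in> {T \<in> affine_kspaces k. p \<in> T}"
    then have T1: "T \<in> affine_kspaces k" and pT: "p \<in> T" by simp_all
    from T1 obtain v W where T: "T = (\<lambda>w. v + w) ` W" and W: "vec.subspace W" "vec.dim W = k"
      unfolding affine_kspaces_def by blast
    from pT obtain w0 where w0: "w0 \<in> W" "p = v + w0" unfolding T by blast
    have "T = (\<lambda>w. p + w) ` W"
    proof (intro equalityI subsetI)
      fix x assume "x \<in> T"
      then obtain w where w: "w \<in> W" "x = v + w" unfolding T by blast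
      have "w - w0 \<in> W" using W(1) w(1) w0(1) by (rule vec.subspace_diff)
      have "x = p + (w - w0)" using w(2) w0(2) by (simp add: algebra_simps)
      then show "x \<in> (\<lambda>w. p + w) ` W" using \<open>w - w0 \<in> W\<close> by (rule image_eqI)
    next
      fix x assume "x \<in> (\<lambda>w. p + w) ` W"
      then obtain w where w: "w \<in> W" "x = p + w" by blast
      have "w0 + w \<in> W" using W(1) w0(1) w(1) by (rule vec.subspace_add)
      have "x = v + (w0 + w)" using w(2) w0(2) by (simp add: add.assoc)
      then show "x \<in> T" unfolding T using \<open>w0 + w \<in> W\<close> by (rule image_eqI)
    qed
    moreover have "W \<in> ?Sub" using W by simp
    ultimately show "\<exists>W\<in>?Sub. T = (\<lambda>w. p + w) ` W" by blast
  qed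
  then show ?thesis by (rule bij_betw_same_card[symmetric])
qed

theorem lemma3p2:
  fixes L S :: "('a::{finite,field} ^ 'n) set set" and k :: nat
  assumes "1 \<le> k" and "k \<le> CARD('n) - 1"
    and "cameron_liebler_kset k L"
    and "is_kspread k S"
  shows "real (card (L \<inter> S)) = cl_parameter k L"
proof -
  let ?AK = "affine_kspaces k :: ('a ^ 'n) set set"
  let ?Sub = "{W :: ('a ^ 'n) set. vec.subspace W \<and> vec.dim W = k}"
  let ?G = "gauss_binom CARD('n) k (real CARD('a))"
  have k: "k \<le> CARD('n)" using assms(2) by simp
  have LA: "L \<subseteq> ?AK" using assms(3) unfolding cameron_liebler_kset_def by blast
  obtain c :: "'a ^ 'n \<Rightarrow> real" where c: "\<And>T. T \<in> ?AK \<Longrightarrow>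
      (if T \<in> L then 1 else 0) = (\<Sum>p\<in>UNIV. c p * (if p \<in> T then 1 else 0))"
    using assms(3) unfolding cameron_liebler_kset_def by blast
  have SA: "S \<subseteq> ?AK" and disj: "\<And>A B. A \<in> S \<Longrightarrow> B \<in> S \<Longrightarrow> A \<noteq> B \<Longrightarrow> A \<inter> B = {}"
    and cov: "\<Union>S = UNIV"
    using assms(4) unfolding is_kspread_def by blast+
  have key: "(\<Sum>T\<in>A. if T \<in> L then 1 else 0 :: real) = (\<Sum>p\<in>UNIV. c p * real (card {T\<in>A. p \<in> T}))"
    if "A \<subseteq> ?AK" for A
  proof -
    have "(\<Sum>T\<in>A. if T \<in> L then 1 else 0 :: real) = (\<Sum>T\<in>A. \<Sum>p\<in>UNIV. c p * (if p \<in> T then 1 else 0))"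
    proof (rule sum.cong[OF refl])
      fix T assume "T \<in> A"
      then have "T \<in> ?AK" using that by blast
      then show "(if T \<in> L then 1 else 0) = (\<Sum>p\<in>UNIV. c p * (if p \<in> T then 1 else 0))" by (rule c)
    qed
    also have "\<dots> = (\<Sum>p\<in>UNIV. \<Sum>T\<in>A. c p * (if p \<in> T then 1 else 0))" by (rule sum.swap)
    also have "\<dots> = (\<Sum>p\<in>UNIV. c p * (\<Sum>T\<in>A. (if p \<in> T then 1 else 0)))"
      by (simp add: sum_distrib_left)
    also have "\<dots> = (\<Sum>p\<in>UNIV. c p * real (card {T\<in>A. p \<in> T}))"
      by (intro sum.cong refl) (simp add: sum_ind)
    finally show ?thesis .
  qed
  have "real (card L) = (\<Sum>T\<in>?AK. if T \<in> L then 1 else 0 :: real)"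
  proof -
    have "{T\<in>?AK. T \<in> L} = L" using LA by blast
    then show ?thesis by (simp add: sum_ind)
  qed
  also have "\<dots> = (\<Sum>p\<in>UNIV. c p * real (card ?Sub))"
    using key[OF order_refl] by (simp add: through_point)
  also have "\<dots> = (\<Sum>p\<in>UNIV. c p) * ?G"
    using count_subspaces_gauss(1)[OF k, where 'a='a] by (simp add: sum_distrib_right)
  finally have cardL: "real (card L) = (\<Sum>p\<in>UNIV. c p) * ?G" .
  have one: "card {T\<in>S. p \<in> T} = 1" for p
  proof -
    have "p \<in> \<Union>S" using cov by simp
    then obtain T0 where T0: "T0 \<in> S" "p \<in> T0" by (rule UnionE)
    have "{T\<in>S. p \<in> T} = {T0}"
    proof (intro equalityI subsetI)
      fix T assume "T \<in> {T\<in>S. p \<in> T}"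
      then have "T \<in> S" "p \<in> T" by simp_all
      show "T \<in> {T0}"
      proof (rule ccontr)
        assume "T \<notin> {T0}"
        then have "T \<noteq> T0" by simp
        then have "T \<inter> T0 = {}" using disj \<open>T \<in> S\<close> T0(1) by blast
        then show False using \<open>p \<in> T\<close> T0(2) by blast
      qed
    next
      fix T assume "T \<in> {T0}"
      then show "T \<in> {T\<in>S. p \<in> T}" using T0 by simp
    qed
    then show ?thesis by simp
  qed
  have "real (card (L \<inter> S)) = (\<Sum>T\<in>S. if T \<in> L then 1 else 0 :: real)"
  proof -
    have "{T\<in>S. T \<in> L} = L \<inter> S" by blast
    then show ?thesis by (simp add: sum_ind)
  qed
  also have "\<dots> = (\<Sum>p\<in>UNIV. c p)" using key[OF SA] one by simp
  finally have "real (card (L \<inter> S)) = (\<Sum>p\<in>UNIV. c p)" .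
  moreover have "?G > 0" using count_subspaces_gauss(2)[OF k, where 'a='a] .
  ultimately show ?thesis unfolding cl_parameter_def using cardL by simp
qed

end
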